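(* Let $\mathcal M=(\mathbf M^{(\lambda)})_{\lambda>0}$ be a weight matrix on $\mathbb N_0^d$. (Roumieu) Suppose that for every $\lambda>0$ there exist $\kappa\ge\lambda$, $A\ge1$ with $M^{(\lambda)}_{\alpha+e_j}\le A^{|\alpha|+1}M^{(\kappa)}_\alpha$ for all $\alpha\in\mathbb N_0^d$, $1\le j\le d$, and that for every $\lambda>0$ there exist $\kappa\ge\lambda$, $A\ge1$ with $M^{(\lambda)}_\alpha M^{(\lambda)}_\beta\le A^{|\alpha+\beta|}M^{(\kappa)}_{\alpha+\beta}$ for all $\alpha,\beta\in\mathbb N_0^d$. Then the following are equivalent: (a) there exist $\lambda>0$ and $C,C_1>0$ with $\alpha^{\alpha/2}\le C_1C^{|\alpha|}M^{(\lambda)}_\alpha$ for all $\alpha\in\mathbb N_0^d$; (b) for every $\lambda>0$ there exist $\kappa\ge\lambda$, $B,C,H>0$ with $\alpha^{\alpha/2}M^{(\lambda)}_\beta\le BC^{|\alpha|}H^{|\alpha+\beta|}M^{(\kappa)}_{\alpha+\beta}$ for all $\alpha,\beta\in\mathbb N_0^d$; (c) $H_\gamma\in\mathcal S_{\{\mathcal M\}}$ for all $\gamma\in\mathbb N_0^d$. (Beurling) Suppose that for every $\lambda>0$ there exist $0<\kappa\le\lambda$, $A\ge1$ with $M^{(\kappa)}_{\alpha+e_j}\le A^{|\alpha|+1}M^{(\lambda)}_\alpha$ for all $\alpha$, $1\le j\le d$, and that for every $\lambda>0$ there exist $0<\kappa\le\lambda$, $A\ge1$ with $M^{(\kappa)}_\alpha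 M^{(\kappa)}_\beta\le A^{|\alpha+\beta|}M^{(\lambda)}_{\alpha+\beta}$ for all $\alpha,\beta$. Then the following are equivalent: (a') for all $\lambda,C>0$ there exists $C_1>0$ with $\alpha^{\alpha/2}\le C_1C^{|\alpha|}M^{(\lambda)}_\alpha$ for all $\alpha\in\mathbb N_0^d$; (b') for every $\lambda>0$ there exist $0<\kappa\le\lambda$, $H>0$ such that for every $C>0$ there is $B>0$ with $\alpha^{\alpha/2}M^{(\kappa)}_\beta\le BC^{|\alpha|}H^{|\alpha+\beta|}M^{(\lambda)}_{\alpha+\beta}$ for all $\alpha,\beta\in\mathbb N_0^d$; (c') $H_\gamma\in\mathcal S_{(\mathcal M)}$ for all $\gamma\in\mathbb N_0^d$.
   Context: A weight matrix is a family $\mathcal M=(\mathbf M^{(\lambda)})_{\lambda>0}$ with $\mathbf M^{(\lambda)}=(M^{(\lambda)}_\alpha)_{\alpha\in\mathbb N_0^d}$ sequences of positive reals, $M^{(\lambda)}_0=1$, and $M^{(\lambda)}_\alpha\le M^{(\kappa)}_\alpha$ for all $\alpha$ whenever $0<\lambda\le\kappa$. Notation: $|\alpha|=\sum\alpha_j$, $e_j$ the $j$-th unit vector, $\alpha^{\alpha/2}=\prod_j\alpha_j^{\alpha_j/2}$ with $0^0=1$. $\|f\|_{\infty,\mathbf M,h}:=\sup_{\alpha,\beta}\frac{\|x^\alpha\partial^\beta f\|_\infty}{h^{|\alpha+\beta|}M_{\alpha+\beta}}$; $\mathcal S_{\{\mathcal M\}}$ ($\mathcal S_{(\mathcal M)}$)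 is the set of $f\in C^\infty(\mathbb R^d)$ with $\|f\|_{\infty,\mathbf M^{(\lambda)},h}<\infty$ for some (for all) $\lambda,h>0$. Hermite functions: $H_\gamma(x)=(2^{|\gamma|}\gamma!\pi^{d/2})^{-1/2}h_\gamma(x)e^{-|x|^2/2}$, $h_\gamma(x)=(-1)^{|\gamma|}e^{|x|^2}\partial^\gamma e^{-|x|^2}$. *)

theory Defs
  imports "HOL-Analysis.Analysis"
begin

text \<open>Multi-indices in N_0^d are functions 'd \<Rightarrow> nat on a finite index type 'd
  (d = CARD('d)); points of R^d are vectors real^'d.\<close>

type_synonym 'd mindex = "'d \<Rightarrow> nat"

definition mabs :: "('d::finite) mindex \<Rightarrow> nat" where
  "mabs \<alpha> = (\<Sum>j\<in>UNIV. \<alpha> j)"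

definition madd :: "('d::finite) mindex \<Rightarrow> 'd mindex \<Rightarrow> 'd mindex" where
  "madd \<alpha> \<beta> = (\<lambda>i. \<alpha> i + \<beta> i)"

definition unitidx :: "('d::finite) \<Rightarrow> 'd mindex" where
  "unitidx j = (\<lambda>i. if i = j then 1 else 0)"

definition mfact :: "('d::finite) mindex \<Rightarrow> nat" where
  "mfact \<alpha> = (\<Prod>j\<in>UNIV. fact (\<alpha> j))"

text \<open>alpha^(alpha/2) = prod_j alpha_j^(alpha_j/2), with 0^0 = 1.\<close>
definition halfpow :: "('d::finite) mindex \<Rightarrow> real" where
  "halfpow \<alpha> = (\<Prod>j\<in>UNIV. sqrt (real (\<alpha> j) ^ (\<alpha> j)))"

definition monomial :: "('d::finite) mindex \<Rightarrow> real^'d \<Rightarrow> real" where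
  "monomial \<alpha> x = (\<Prod>j\<in>UNIV. (x $ j) ^ (\<alpha> j))"

definition weight_matrix :: "(real \<Rightarrow> ('d::finite) mindex \<Rightarrow> real) \<Rightarrow> bool" where
  "weight_matrix M \<longleftrightarrow>
     (\<forall>lam>0. (\<forall>\<alpha>. M lam \<alpha> > 0) \<and> M lam (\<lambda>_. 0) = 1) \<and>
     (\<forall>lam kap \<alpha>. 0 < lam \<longrightarrow> lam \<le> kap \<longrightarrow> M lam \<alpha> \<le> M kap \<alpha>)"

definition partial :: "'d::finite \<Rightarrow> (real^'d \<Rightarrow> real) \<Rightarrow> real^'d \<Rightarrow> real" where
  "partial j f x = deriv (\<lambda>t. f (x + t *\<^sub>R axis j 1)) 0"

fun iter_partial :: "('d::finite) list \<Rightarrow> (real^'d \<Rightarrow> real) \<Rightarrow> real^'d \<Rightarrow> real" where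
  "iter_partial [] f = f"
| "iter_partial (j # js) f = partial j (iter_partial js f)"

definition smooth :: "(real^('d::finite) \<Rightarrow> real) \<Rightarrow> bool" where
  "smooth f \<longleftrightarrow> (\<forall>js x. iter_partial js f differentiable (at x))"

definition dlist :: "('d::finite) list" where
  "dlist = (SOME xs. distinct xs \<and> set xs = UNIV)"

text \<open>partial^beta f (order irrelevant for smooth f).\<close>
definition mderiv :: "('d::finite) mindex \<Rightarrow> (real^'d \<Rightarrow> real) \<Rightarrow> real^'d \<Rightarrow> real" where
  "mderiv \<beta> f = iter_partial (concat (map (\<lambda>j. replicate (\<beta> j) j) dlist)) f"

definition GS_bounded :: "(real^('d::finite) \<Rightarrow> real) \<Rightarrow> ('d mindex \<Rightarrow> real) \<Rightarrow> real \<Rightarrow> bool" where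
  "GS_bounded f Mseq h \<longleftrightarrow> (\<exists>K. \<forall>\<alpha> \<beta> x.
     \<bar>monomial \<alpha> x * mderiv \<beta> f x\<bar> \<le> K * h ^ mabs (madd \<alpha> \<beta>) * Mseq (madd \<alpha> \<beta>))"

definition S_Roumieu :: "(real \<Rightarrow> ('d::finite) mindex \<Rightarrow> real) \<Rightarrow> (real^'d \<Rightarrow> real) set" where
  "S_Roumieu M = {f. smooth f \<and> (\<exists>lam>0. \<exists>h>0. GS_bounded f (M lam) h)}"

definition S_Beurling :: "(real \<Rightarrow> ('d::finite) mindex \<Rightarrow> real) \<Rightarrow> (real^'d \<Rightarrow> real) set" where
  "S_Beurling M = {f. smooth f \<and> (\<forall>lam>0. \<forall>h>0. GS_bounded f (M lam) h)}"

definition hermite_poly :: "('d::finite) mindex \<Rightarrow> real^'d \<Rightarrow> real" where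
  "hermite_poly \<gamma> x = (-1) ^ mabs \<gamma> * exp (norm x ^ 2) * mderiv \<gamma> (\<lambda>y. exp (- (norm y ^ 2))) x"

definition hermite_fun :: "('d::finite) mindex \<Rightarrow> real^'d \<Rightarrow> real" where
  "hermite_fun \<gamma> x = inverse (sqrt (2 ^ mabs \<gamma> * real (mfact \<gamma>) * pi powr (real CARD('d) / 2)))
      * hermite_poly \<gamma> x * exp (- (norm x ^ 2) / 2)"

end

theory Submission
  imports Defs "HOL-Computational_Algebra.Polynomial"
begin

definition tprod :: "('d::finite \<Rightarrow> real \<Rightarrow> real) \<Rightarrow> real^'d \<Rightarrow> real" where
  "tprod u x = (\<Prod>j\<in>UNIV. u j (x$j))"

definition smooth1 :: "(real \<Rightarrow> real) \<Rightarrow> bool" where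
  "smooth1 v \<longleftrightarrow> (\<forall>n t. (deriv^^n) v differentiable (at t))"

lemma smooth1_deriv: "smooth1 v \<Longrightarrow> smooth1 (deriv v)"
  unfolding smooth1_def by (metis funpow_Suc_right o_apply)

lemma partial_tprod:
  assumes "u k differentiable (at (x$k))"
  shows "partial k (tprod u) x = tprod (u(k := deriv (u k))) x"
proof -
  define R where "R = (\<Prod>j\<in>UNIV-{k}. u j (x$j))"
  have eq: "(\<lambda>t. tprod u (x + t *\<^sub>R axis k 1)) = (\<lambda>t. u k (x$k + t) * R)"
  proof
    fix t
    have "tprod u (x + t *\<^sub>R axis k 1) = u k ((x + t *\<^sub>R axis k 1)$k) * (\<Prod>j\<in>UNIV-{k}. u j ((x + t *\<^sub>R axis k 1)$j))"
      unfolding tprod_def by (simp add: prod.remove[of UNIV k])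
    also have "(\<Prod>j\<in>UNIV-{k}. u j ((x + t *\<^sub>R axis k 1)$j)) = R"
      unfolding R_def by (rule prod.cong) (auto simp: axis_def)
    finally show "tprod u (x + t *\<^sub>R axis k 1) = u k (x$k + t) * R" by (simp add: axis_def)
  qed
  have d: "DERIV (u k) (x$k) :> deriv (u k) (x$k)"
    using assms DERIV_deriv_iff_real_differentiable by blast
  have "DERIV (\<lambda>t. u k (x$k + t) * R) 0 :> deriv (u k) (x$k) * R"
    using DERIV_shift[THEN iffD1, of "u k" "deriv (u k) (x$k)" 0 "x$k"] d
    by (auto intro!: derivative_eq_intros simp: add.commute)
  hence "partial k (tprod u) x = deriv (u k) (x$k) * R"
    unfolding partial_def eq by (rule DERIV_imp_deriv)
  also have "\<dots> = tprod (u(k := deriv (u k))) x"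
  proof -
    have "(\<Prod>j\<in>UNIV. (u(k := deriv (u k))) j (x $ j)) = (u(k := deriv (u k))) k (x$k) * (\<Prod>j\<in>UNIV-{k}. (u(k := deriv (u k))) j (x $ j))"
      by (rule prod.remove) auto
    also have "(\<Prod>j\<in>UNIV-{k}. (u(k := deriv (u k))) j (x $ j)) = R"
      unfolding R_def by (rule prod.cong) auto
    finally show ?thesis unfolding tprod_def by simp
  qed
  finally show ?thesis .
qed

lemma iter_partial_tprod:
  assumes "\<forall>j. smooth1 (u j)"
  shows "iter_partial js (tprod u) = tprod (\<lambda>j. (deriv^^count_list js j) (u j))"
proof (induction js)
  case Nil
  then show ?case by simp
next
  case (Cons k js)
  define v where "v = (\<lambda>j. (deriv^^count_list js j) (u j))"
  have dv: "v k differentiable (at t)" for t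
    using assms unfolding smooth1_def v_def by blast
  have "iter_partial (k # js) (tprod u) = partial k (tprod v)"
    using Cons by (simp add: v_def)
  also have "\<dots> = tprod (v(k := deriv (v k)))"
    using partial_tprod[of v k, OF dv] by (intro ext) simp
  also have "v(k := deriv (v k)) = (\<lambda>j. (deriv^^count_list (k#js) j) (u j))"
    by (rule ext) (simp add: v_def)
  finally show ?case .
qed

lemma tprod_differentiable:
  assumes "\<forall>j t. v j differentiable (at t)"
  shows "tprod v differentiable (at x)"
proof -
  have "(\<lambda>x. \<Prod>j\<in>S. v j ((x::real^'a)$j)) differentiable (at x)" if "finite S" for S :: "'a::finite set"
    using that
  proof (induction S rule: finite_induct)
    case empty
    then show ?case by simp
  next
    case (insert a S)
    have "(\<lambda>x. v a ((x::real^'a)$a)) differentiable (at x)"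
      by (rule differentiable_compose[of "v a"]) (use assms bounded_linear_imp_differentiable[OF bounded_linear_vec_nth] in auto)
    then show ?case using insert by (simp add: prod.insert)
  qed
  then show ?thesis unfolding tprod_def[abs_def] by simp
qed

lemma smooth_tprod:
  assumes "\<forall>j. smooth1 (u j)"
  shows "smooth (tprod u)"
  unfolding smooth_def
proof (intro allI)
  fix js x
  show "iter_partial js (tprod u) differentiable (at x)"
    unfolding iter_partial_tprod[OF assms]
    by (rule tprod_differentiable) (use assms in \<open>auto simp: smooth1_def\<close>)
qed

lemma count_list_replicate: "count_list (replicate n j) k = (if j = k then n else 0)"
  by (induction n) auto

lemma count_list_concat_rep:
  "distinct l \<Longrightarrow> count_list (concat (map (\<lambda>j. replicate (\<beta> j) j) l)) k = (if k \<in> set l then \<beta> k else 0)"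
  by (induction l) (auto simp: count_list_replicate)

lemma dlist_props: "distinct (dlist::('d::finite) list) \<and> set dlist = (UNIV::'d set)"
proof -
  have "\<exists>xs::'d list. distinct xs \<and> set xs = UNIV"
    using finite_distinct_list[of "UNIV::'d set"] by auto
  then show ?thesis unfolding dlist_def by (rule someI_ex)
qed

lemma mderiv_tprod:
  fixes u :: "'d::finite \<Rightarrow> real \<Rightarrow> real"
  assumes "\<forall>j. smooth1 (u j)"
  shows "mderiv \<beta> (tprod u) = tprod (\<lambda>j. (deriv^^\<beta> j) (u j))"
  unfolding mderiv_def iter_partial_tprod[OF assms]
proof -
  have "count_list (concat (map (\<lambda>j. replicate (\<beta> j) j) (dlist::'d list))) k = \<beta> k" for k
    using dlist_props[where 'd='d] by (simp add: count_list_concat_rep)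
  then show "tprod (\<lambda>j. (deriv^^count_list (concat (map (\<lambda>j. replicate (\<beta> j) j) (dlist::'d list))) j) (u j)) = tprod (\<lambda>j. (deriv^^\<beta> j) (u j))"
    by simp
qed

lemma monomial_tprod:
  "monomial \<alpha> x * tprod v x = (\<Prod>j\<in>UNIV. (x$j)^(\<alpha> j) * v j (x$j))"
  unfolding monomial_def tprod_def by (simp add: prod.distrib)

definition ge :: "real \<Rightarrow> real poly \<Rightarrow> real \<Rightarrow> real" where
  "ge c p t = poly p t * exp (- (c * t^2))"

definition Dop :: "real \<Rightarrow> real poly \<Rightarrow> real poly" where
  "Dop c p = pderiv p - smult (2*c) (pCons 0 p)"

lemma ge_DERIV: "DERIV (ge c p) t :> ge c (Dop c p) t"
proof -
  have "DERIV (\<lambda>t. poly p t * exp (- (c * t^2))) t :> poly (pderiv p) t * exp (- (c * t^2)) + poly p t * (exp (- (c * t^2)) * (- (c * (2 * t))))"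
    by (auto intro!: derivative_eq_intros poly_DERIV)
  moreover have "poly (pderiv p) t * exp (- (c * t^2)) + poly p t * (exp (- (c * t^2)) * (- (c * (2 * t)))) = ge c (Dop c p) t"
    unfolding ge_def Dop_def by (simp add: algebra_simps)
  ultimately show ?thesis unfolding ge_def[abs_def] by simp
qed

lemma deriv_ge: "deriv (ge c p) = ge c (Dop c p)"
  using ge_DERIV DERIV_imp_deriv by blast

lemma funpow_deriv_ge: "(deriv^^n) (ge c p) = ge c ((Dop c ^^ n) p)"
  by (induction n) (simp_all add: deriv_ge)

lemma smooth1_ge: "smooth1 (ge c p)"
  unfolding smooth1_def funpow_deriv_ge using ge_DERIV real_differentiable_def by blast

lemma norm_sq_vec: "norm (y::real^'d::finite) ^ 2 = (\<Sum>j\<in>UNIV. (y$j)^2)"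
  unfolding power2_norm_eq_inner inner_vec_def by (simp add: power2_eq_square)

lemma gauss_tprod: "(\<lambda>y::real^'d::finite. exp (- (norm y ^ 2))) = tprod (\<lambda>j. ge 1 1)"
  by (rule ext) (simp add: tprod_def ge_def norm_sq_vec exp_sum[symmetric] sum_negf)

definition hP :: "('d::finite) mindex \<Rightarrow> 'd \<Rightarrow> real poly" where
  "hP \<gamma> j = (Dop 1 ^^ \<gamma> j) 1"

definition hK :: "('d::finite) mindex \<Rightarrow> real" where
  "hK \<gamma> = inverse (sqrt (2 ^ mabs \<gamma> * real (mfact \<gamma>) * pi powr (real CARD('d) / 2))) * (-1) ^ mabs \<gamma>"

definition hQ :: "('d::finite) mindex \<Rightarrow> 'd \<Rightarrow> real poly" where
  "hQ \<gamma> j = (if j = undefined then smult (hK \<gamma>) (hP \<gamma> j) else hP \<gamma> j)"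

lemma prod_upd_undefined:
  "(\<Prod>j\<in>(UNIV::'d::finite set). (if j = undefined then K * a j else a j)) = K * (\<Prod>j\<in>UNIV. a j)"
proof -
  have "(\<Prod>j\<in>(UNIV::'d set). (if j = undefined then K * a j else a j)) = (K * a undefined) * (\<Prod>j\<in>UNIV-{undefined}. (if j = undefined then K * a j else a j))"
    by (subst prod.remove[of UNIV undefined]) auto
  also have "(\<Prod>j\<in>UNIV-{undefined}. (if j = undefined then K * a j else a j)) = (\<Prod>j\<in>UNIV-{undefined}. a j)"
    by (rule prod.cong) auto
  also have "K * a undefined * (\<Prod>j\<in>UNIV-{undefined}. a j) = K * (\<Prod>j\<in>(UNIV::'d set). a j)"
    by (subst prod.remove[of UNIV undefined]) (auto simp: mult.assoc)
  finally show ?thesis .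
qed

lemma hermite_tprod: "hermite_fun (\<gamma>::('d::finite) mindex) = tprod (\<lambda>j. ge (1/2) (hQ \<gamma> j))"
proof
  fix x :: "real^'d"
  define s where "s = (\<Sum>j\<in>UNIV. (x$j)^2)"
  have ns: "norm x ^ 2 = s" unfolding s_def by (rule norm_sq_vec)
  have md: "mderiv \<gamma> (\<lambda>y::real^'d. exp (- (norm y ^ 2))) x = tprod (\<lambda>j. ge 1 (hP \<gamma> j)) x"
    unfolding gauss_tprod mderiv_tprod[OF allI[OF smooth1_ge]] funpow_deriv_ge hP_def by simp
  have e1: "(\<Prod>j\<in>UNIV. exp (- (1 * (x$j)^2))) = exp (- s)"
    by (simp add: s_def exp_sum[symmetric] sum_negf)
  have e2: "(\<Prod>j\<in>UNIV. exp (- (1/2 * (x$j)^2))) = exp (- s / 2)"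
    by (simp add: s_def exp_sum[symmetric] sum_negf sum_divide_distrib)
  have ee: "exp s * exp (- s) * exp (- s / 2) = exp (- s / 2)"
    by (simp add: exp_add[symmetric])
  have "hermite_fun \<gamma> x = hK \<gamma> * (\<Prod>j\<in>UNIV. poly (hP \<gamma> j) (x$j)) * (exp s * exp (- s) * exp (- s / 2))"
    unfolding hermite_fun_def hermite_poly_def md ns tprod_def ge_def prod.distrib e1 hK_def
    by (simp add: algebra_simps)
  also have "\<dots> = hK \<gamma> * (\<Prod>j\<in>UNIV. poly (hP \<gamma> j) (x$j)) * (\<Prod>j\<in>UNIV. exp (- (1/2 * (x$j)^2)))"
    unfolding ee e2 ..
  also have "hK \<gamma> * (\<Prod>j\<in>UNIV. poly (hP \<gamma> j) (x$j)) = (\<Prod>j\<in>UNIV. poly (hQ \<gamma> j) (x$j))"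
  proof -
    have "poly (hQ \<gamma> j) (x$j) = (if j = undefined then hK \<gamma> * poly (hP \<gamma> j) (x$j) else poly (hP \<gamma> j) (x$j))" for j
      by (simp add: hQ_def)
    then show ?thesis using prod_upd_undefined[of "hK \<gamma>" "\<lambda>j. poly (hP \<gamma> j) (x$j)"] by simp
  qed
  also have "(\<Prod>j\<in>UNIV. poly (hQ \<gamma> j) (x$j)) * (\<Prod>j\<in>UNIV. exp (- (1/2 * (x$j)^2))) = tprod (\<lambda>j. ge (1/2) (hQ \<gamma> j)) x"
    unfolding tprod_def ge_def prod.distrib ..
  finally show "hermite_fun \<gamma> x = tprod (\<lambda>j. ge (1/2) (hQ \<gamma> j)) x" .
qed

lemma smooth_hermite: "smooth (hermite_fun \<gamma>)"
  unfolding hermite_tprod by (rule smooth_tprod) (simp add: smooth1_ge)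

definition T :: "nat \<Rightarrow> real" where "T m = sqrt (real m ^ m)"

lemma T_nonneg: "0 \<le> T m" unfolding T_def by simp

lemma pow_le_exp:
  assumes s: "(s::real) \<ge> 0" shows "s ^ m \<le> real m ^ m * exp s"
proof (cases "m = 0")
  case True
  then show ?thesis using s by simp
next
  case False
  have mp: "real m > 0" using False by simp
  have "s / m \<le> exp (s / m)" using exp_ge_add_one_self[of "s/m"] by linarith
  hence "(s / m) ^ m \<le> exp (s / m) ^ m" by (rule power_mono) (use s mp in simp)
  also have "exp (s / m) ^ m = exp s" using mp by (simp add: exp_of_nat_mult[symmetric])
  finally have "(s / m) ^ m \<le> exp s" .
  hence "real m ^ m * (s / m) ^ m \<le> real m ^ m * exp s" by (simp add: mult_left_mono)
  moreover have "real m ^ m * (s / m) ^ m = s ^ m" using mp by (simp add: power_divide)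
  ultimately show ?thesis by simp
qed

lemma gauss_mom: "\<bar>t\<bar> ^ m * exp (- (1/2 * t^2)) \<le> T m"
proof -
  have "(\<bar>t\<bar> ^ m * exp (- (1/2 * t^2)))^2 = (t^2)^m * exp (- (t^2))"
    by (simp add: power_mult_distrib power_even_abs exp_of_nat_mult[symmetric] power_mult[symmetric] mult.commute)
  also have "\<dots> \<le> real m ^ m" using pow_le_exp[of "t^2" m]
    by (simp add: exp_minus field_simps)
  finally show ?thesis unfolding T_def by (rule real_le_rsqrt)
qed

lemma T_Suc: "T (Suc m) \<le> 2 ^ m * T m"
proof -
  have nat: "(m+1)^(m+1) \<le> 4^m * m^m"
  proof (cases "m = 0")
    case False
    have "(m+1)^m \<le> (2*m)^m" by (rule power_mono) (use False in auto)
    moreover have "m + 1 \<le> 2^m" using False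
      by (metis Suc_eq_plus1 Suc_leI less_exp)
    ultimately have "(m+1) * (m+1)^m \<le> 2^m * (2*m)^m" by (rule mult_le_mono[rotated])
    also have "\<dots> = 2^m * 2^m * m^m" by (simp add: power_mult_distrib)
    also have "(2::nat)^m * 2^m = 4^m" by (simp flip: power_mult_distrib)
    finally show ?thesis by simp
  qed simp
  have r: "real ((m+1)^(m+1)) \<le> real (4^m * m^m)" using nat by (rule of_nat_mono)
  have r2: "((2::real)^m)^2 = 4^m" by (simp add: power2_eq_square flip: power_mult_distrib)
  have "real (Suc m) ^ Suc m \<le> (2^m)^2 * real m ^ m"
    unfolding r2 using r by (metis Suc_eq_plus1 of_nat_mult of_nat_numeral of_nat_power)
  hence "sqrt (real (Suc m) ^ Suc m) \<le> sqrt ((2^m)^2 * real m ^ m)" by (rule real_sqrt_le_mono)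
  also have "\<dots> = 2^m * T m" unfolding T_def by (simp add: real_sqrt_mult)
  finally show ?thesis unfolding T_def .
qed

lemma T_shift: "T (m + i) \<le> 2 ^ (i * (m + i)) * T m"
proof (induction i)
  case 0 then show ?case by simp
next
  case (Suc i)
  have "T (m + Suc i) \<le> 2 ^ (m + i) * T (m + i)" using T_Suc[of "m+i"] by simp
  also have "\<dots> \<le> 2 ^ (m + i) * (2 ^ (i * (m + i)) * T m)" using Suc by (simp add: mult_left_mono)
  also have "\<dots> = 2 ^ ((i+1) * (m + i)) * T m" by (simp add: power_add algebra_simps)
  also have "\<dots> \<le> 2 ^ (Suc i * (m + Suc i)) * T m"
    by (rule mult_right_mono[OF power_increasing T_nonneg]) auto
  finally show ?case .
qed

definition Sb :: "nat \<Rightarrow> real poly \<Rightarrow> nat \<Rightarrow> real" where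
  "Sb N p a = (\<Sum>i\<le>N. \<bar>coeff p i\<bar> * T (a+i))"

definition S :: "real poly \<Rightarrow> nat \<Rightarrow> real" where
  "S p a = Sb (degree p) p a"

lemma Sb_eq: "degree p \<le> N \<Longrightarrow> Sb N p a = S p a"
  unfolding S_def Sb_def
  by (rule sum.mono_neutral_right) (auto simp: coeff_eq_0)

lemma ge_bound: "\<bar>t^a * ge (1/2) p t\<bar> \<le> S p a"
proof -
  have "t^a * ge (1/2) p t = (\<Sum>i\<le>degree p. coeff p i * (t^(a+i) * exp (- (1/2 * t^2))))"
    unfolding ge_def poly_altdef by (simp add: sum_distrib_left sum_distrib_right power_add algebra_simps)
  also have "\<bar>\<dots>\<bar> \<le> (\<Sum>i\<le>degree p. \<bar>coeff p i * (t^(a+i) * exp (- (1/2 * t^2)))\<bar>)"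
    by (rule sum_abs)
  also have "\<dots> \<le> (\<Sum>i\<le>degree p. \<bar>coeff p i\<bar> * T (a+i))"
  proof (rule sum_mono)
    fix i
    have "\<bar>coeff p i * (t^(a+i) * exp (- (1/2 * t^2)))\<bar> = \<bar>coeff p i\<bar> * (\<bar>t\<bar>^(a+i) * exp (- (1/2 * t^2)))"
      by (simp add: abs_mult power_abs)
    also have "\<dots> \<le> \<bar>coeff p i\<bar> * T (a+i)"
      by (rule mult_left_mono[OF gauss_mom]) simp
    finally show "\<bar>coeff p i * (t^(a+i) * exp (- (1/2 * t^2)))\<bar> \<le> \<bar>coeff p i\<bar> * T (a+i)" .
  qed
  finally show ?thesis unfolding S_def Sb_def .
qed

lemma T_two:
  assumes "real k \<le> real m + 2"
  shows "real k * T m \<le> T (m+2)"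
proof -
  have "(real k)^2 * real m ^ m \<le> (real m + 2)^2 * (real m + 2) ^ m"
    by (rule mult_mono) (use assms in \<open>auto intro!: power_mono\<close>)
  also have "\<dots> = real (m+2) ^ (m+2)" by (simp add: power_add power2_eq_square algebra_simps)
  finally have "sqrt ((real k)^2 * real m ^ m) \<le> sqrt (real (m+2) ^ (m+2))"
    by (rule real_sqrt_le_mono)
  then show ?thesis unfolding T_def by (simp add: real_sqrt_mult)
qed

lemma S_Dop: "S (Dop (1/2) p) a \<le> 2 * S p (a+1)"
proof -
  define n where "n = degree p"
  have dg: "degree (Dop (1/2) p) \<le> Suc n"
    unfolding Dop_def n_def
    by (rule degree_diff_le) (auto simp: degree_pderiv intro: order.trans[OF degree_pCons_le])
  have "S (Dop (1/2) p) a = Sb (Suc n) (Dop (1/2) p) a" using Sb_eq[OF dg] by simp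
  also have "\<dots> = (\<Sum>i\<le>Suc n. \<bar>coeff (pderiv p) i - coeff (pCons 0 p) i\<bar> * T (a+i))"
    unfolding Sb_def Dop_def by simp
  also have "\<dots> \<le> (\<Sum>i\<le>Suc n. \<bar>coeff (pderiv p) i\<bar> * T (a+i)) + (\<Sum>i\<le>Suc n. \<bar>coeff (pCons 0 p) i\<bar> * T (a+i))"
    unfolding sum.distrib[symmetric]
    by (rule sum_mono) (use T_nonneg in \<open>auto simp flip: distrib_right intro!: mult_right_mono abs_triangle_ineq4\<close>)
  also have "(\<Sum>i\<le>Suc n. \<bar>coeff (pderiv p) i\<bar> * T (a+i)) \<le> S p (a+1)"
  proof -
    have "(\<Sum>i\<le>Suc n. \<bar>coeff (pderiv p) i\<bar> * T (a+i)) = (\<Sum>i\<le>Suc n. \<bar>coeff p (Suc i)\<bar> * (real (Suc i) * T (a+i)))"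
      by (intro sum.cong refl) (simp add: coeff_pderiv abs_mult mult_ac del: of_nat_Suc)
    also have "\<dots> \<le> (\<Sum>i\<le>Suc n. \<bar>coeff p (Suc i)\<bar> * T (a+1+Suc i))"
      by (rule sum_mono, rule mult_left_mono) (use T_two[of "Suc i" "a+i" for i] in auto)
    also have "\<dots> \<le> \<bar>coeff p 0\<bar> * T (a+1+0) + (\<Sum>i\<le>Suc n. \<bar>coeff p (Suc i)\<bar> * T (a+1+Suc i))"
      using T_nonneg by simp
    also have "\<dots> = Sb (Suc (Suc n)) p (a+1)"
      unfolding Sb_def by (rule sum.atMost_Suc_shift[symmetric])
    also have "\<dots> = S p (a+1)" by (rule Sb_eq) (simp add: n_def)
    finally show ?thesis .
  qed
  also have "(\<Sum>i\<le>Suc n. \<bar>coeff (pCons 0 p) i\<bar> * T (a+i)) = S p (a+1)"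
    unfolding sum.atMost_Suc_shift S_def Sb_def n_def by simp
  finally show ?thesis by simp
qed

lemma S_iter: "S ((Dop (1/2) ^^ b) p) a \<le> 2^b * S p (a+b)"
proof (induction b arbitrary: a)
  case 0 then show ?case by simp
next
  case (Suc b)
  have "S ((Dop (1/2) ^^ Suc b) p) a = S (Dop (1/2) ((Dop (1/2) ^^ b) p)) a" by simp
  also have "\<dots> \<le> 2 * S ((Dop (1/2) ^^ b) p) (a+1)" by (rule S_Dop)
  also have "\<dots> \<le> 2 * (2^b * S p (a+1+b))" using Suc[of "a+1"] by simp
  finally show ?case by (simp add: algebra_simps)
qed

lemma S_T: "S p m \<le> (\<Sum>i\<le>degree p. \<bar>coeff p i\<bar>) * 2 ^ (degree p * (m + degree p)) * T m"
proof -
  have "S p m \<le> (\<Sum>i\<le>degree p. \<bar>coeff p i\<bar> * (2 ^ (degree p * (m + degree p)) * T m))"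
    unfolding S_def Sb_def
  proof (rule sum_mono, rule mult_left_mono)
    fix i assume "i \<in> {..degree p}"
    hence "i * (m + i) \<le> degree p * (m + degree p)" by (auto intro: mult_le_mono)
    hence "(2::real) ^ (i * (m + i)) \<le> 2 ^ (degree p * (m + degree p))" by (rule power_increasing) simp
    then show "T (m + i) \<le> 2 ^ (degree p * (m + degree p)) * T m"
      using T_shift[of m i] T_nonneg[of m] by (meson mult_right_mono order.trans)
  qed simp
  then show ?thesis by (simp add: sum_distrib_right mult.assoc)
qed

lemma one_dim_bound:
  "\<exists>K D. K \<ge> 0 \<and> D \<ge> 1 \<and> (\<forall>a b t. \<bar>t^a * (deriv^^b) (ge (1/2) p) t\<bar> \<le> K * D^(a+b) * T (a+b))"
proof -
  define n where "n = degree p"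
  define L where "L = (\<Sum>i\<le>n. \<bar>coeff p i\<bar>)"
  have L0: "L \<ge> 0" unfolding L_def by (simp add: sum_nonneg)
  show ?thesis
  proof (intro exI conjI allI)
    show "L * 2^(n*n) \<ge> 0" using L0 by simp
    show "(2::real)^(n+1) \<ge> 1" by (rule one_le_power) simp
    fix a b t
    have "\<bar>t^a * (deriv^^b) (ge (1/2) p) t\<bar> \<le> S ((Dop (1/2) ^^ b) p) a"
      unfolding funpow_deriv_ge by (rule ge_bound)
    also have "\<dots> \<le> 2^b * S p (a+b)" by (rule S_iter)
    also have "\<dots> \<le> 2^b * (L * 2 ^ (n * (a + b + n)) * T (a+b))"
      using S_T[of p "a+b"] unfolding L_def n_def by simp
    also have "\<dots> = L * 2^(n*n) * (2^b * (2^n)^(a+b)) * T (a+b)"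
    proof -
      have "(2::real) ^ (n * (a + b + n)) = 2^(n*n) * (2^n)^(a+b)"
        by (simp add: power_add[symmetric] power_mult[symmetric] algebra_simps)
      then show ?thesis by (simp add: algebra_simps)
    qed
    also have "\<dots> \<le> L * 2^(n*n) * ((2::real)^(n+1))^(a+b) * T (a+b)"
    proof -
      have "(2::real)^b * (2^n)^(a+b) \<le> (2^(n+1))^(a+b)"
        by (simp add: power_add power_mult_distrib[symmetric] power_mult[symmetric] mult.commute mult_right_mono power_increasing)
      then show ?thesis using L0 T_nonneg[of "a+b"] by (simp add: mult_left_mono mult_right_mono mult.assoc)
    qed
    finally show "\<bar>t^a * (deriv^^b) (ge (1/2) p) t\<bar> \<le> L * 2^(n*n) * (2^(n+1))^(a+b) * T (a+b)" .
  qed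
qed

lemma hermite_bound:
  "\<exists>K D. K \<ge> 0 \<and> D \<ge> 1 \<and> (\<forall>\<alpha> \<beta> x. \<bar>monomial \<alpha> x * mderiv \<beta> (hermite_fun (\<gamma>::('d::finite) mindex)) x\<bar>
      \<le> K * D ^ mabs (madd \<alpha> \<beta>) * halfpow (madd \<alpha> \<beta>))"
proof -
  have "\<forall>j. \<exists>KD. fst KD \<ge> 0 \<and> snd KD \<ge> 1 \<and> (\<forall>a b t. \<bar>t^a * (deriv^^b) (ge (1/2) (hQ \<gamma> j)) t\<bar> \<le> fst KD * snd KD^(a+b) * T (a+b))"
    using one_dim_bound by fastforce
  then obtain KD where KD: "\<And>j. fst (KD j) \<ge> 0 \<and> snd (KD j) \<ge> 1 \<and> (\<forall>a b t. \<bar>t^a * (deriv^^b) (ge (1/2) (hQ \<gamma> j)) t\<bar> \<le> fst (KD j) * snd (KD j)^(a+b) * T (a+b))"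
    by metis
  define Kf where "Kf j = fst (KD j)" for j
  define Df where "Df j = snd (KD j)" for j
  define D where "D = (\<Sum>j\<in>(UNIV::'d set). Df j)"
  define K where "K = (\<Prod>j\<in>(UNIV::'d set). Kf j)"
  have DfD: "Df j \<le> D" for j
    unfolding D_def by (rule member_le_sum) (use KD in \<open>auto simp: Df_def intro: order.trans[of 0 1]\<close>)
  have D1: "D \<ge> 1" using DfD[of undefined] KD[of undefined] by (simp add: Df_def)
  have K0: "K \<ge> 0" unfolding K_def by (rule prod_nonneg) (use KD in \<open>simp add: Kf_def\<close>)
  show ?thesis
  proof (intro exI conjI allI)
    show "K \<ge> 0" "D \<ge> 1" by (fact K0, fact D1)
    fix \<alpha> \<beta> x
    have "\<bar>monomial \<alpha> x * mderiv \<beta> (hermite_fun \<gamma>) x\<bar>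
        = (\<Prod>j\<in>UNIV. \<bar>(x$j)^(\<alpha> j) * (deriv^^\<beta> j) (ge (1/2) (hQ \<gamma> j)) (x$j)\<bar>)"
      unfolding hermite_tprod mderiv_tprod[OF allI[OF smooth1_ge]] monomial_tprod abs_prod ..
    also have "\<dots> \<le> (\<Prod>j\<in>UNIV. Kf j * D^(\<alpha> j + \<beta> j) * T (\<alpha> j + \<beta> j))"
    proof (rule prod_mono, intro conjI)
      fix j :: 'd
      have "\<bar>(x$j)^(\<alpha> j) * (deriv^^\<beta> j) (ge (1/2) (hQ \<gamma> j)) (x$j)\<bar> \<le> Kf j * Df j^(\<alpha> j + \<beta> j) * T (\<alpha> j + \<beta> j)"
        using KD[of j] by (simp add: Kf_def Df_def)
      also have "\<dots> \<le> Kf j * D^(\<alpha> j + \<beta> j) * T (\<alpha> j + \<beta> j)"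
        using KD[of j] DfD[of j] T_nonneg
        by (intro mult_right_mono mult_left_mono power_mono) (auto simp: Kf_def Df_def)
      finally show "\<bar>(x$j)^(\<alpha> j) * (deriv^^\<beta> j) (ge (1/2) (hQ \<gamma> j)) (x$j)\<bar> \<le> Kf j * D^(\<alpha> j + \<beta> j) * T (\<alpha> j + \<beta> j)" .
    qed simp
    also have "\<dots> = K * D ^ mabs (madd \<alpha> \<beta>) * halfpow (madd \<alpha> \<beta>)"
      unfolding K_def mabs_def madd_def halfpow_def T_def prod.distrib power_sum ..
    finally show "\<bar>monomial \<alpha> x * mderiv \<beta> (hermite_fun \<gamma>) x\<bar> \<le> K * D ^ mabs (madd \<alpha> \<beta>) * halfpow (madd \<alpha> \<beta>)" .
  qed
qed

lemma madd_zero: "madd \<alpha> (\<lambda>_. 0) = \<alpha>" unfolding madd_def by simp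

lemma concat_map_nil: "concat (map (\<lambda>j. []) l) = []" by (induction l) auto

lemma mderiv_zero: "mderiv (\<lambda>_. 0) f = f" unfolding mderiv_def by (simp add: concat_map_nil)

lemma hermite0: "hermite_fun (\<lambda>_. 0::nat) x = inverse (sqrt (pi powr (real CARD('d) / 2))) * exp (- (norm (x::real^'d::finite) ^ 2) / 2)"
  unfolding hermite_fun_def hermite_poly_def mderiv_zero
  by (simp add: mabs_def mfact_def exp_minus)

lemma hermite0_lower:
  fixes Mseq :: "('d::finite) mindex \<Rightarrow> real"
  assumes gs: "GS_bounded (hermite_fun (\<lambda>_. 0::nat)) Mseq h" and h: "h > 0" and Mpos: "\<forall>\<alpha>. Mseq \<alpha> > 0"
  shows "\<exists>C1>0. \<forall>\<alpha>. halfpow \<alpha> \<le> C1 * (exp (1/2) * h) ^ mabs \<alpha> * Mseq \<alpha>"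
proof -
  obtain Kb where Kb: "\<And>\<alpha> \<beta> x. \<bar>monomial \<alpha> x * mderiv \<beta> (hermite_fun (\<lambda>_. 0::nat)) (x::real^'d)\<bar> \<le> Kb * h ^ mabs (madd \<alpha> \<beta>) * Mseq (madd \<alpha> \<beta>)"
    using gs unfolding GS_bounded_def by blast
  define c0 where "c0 = inverse (sqrt (pi powr (real CARD('d) / 2)))"
  have c0: "c0 > 0" unfolding c0_def by simp
  define K1 where "K1 = max Kb 1"
  show ?thesis
  proof (intro exI conjI allI)
    show "K1 / c0 > 0" using c0 by (simp add: K1_def)
    fix \<alpha> :: "'d mindex"
    define x :: "real^'d" where "x = (\<chi> j. sqrt (real (\<alpha> j)))"
    have mono: "monomial \<alpha> x = halfpow \<alpha>"
      unfolding monomial_def halfpow_def x_def by (simp add: real_sqrt_power)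
    have nx: "norm x ^ 2 = real (mabs \<alpha>)"
      unfolding norm_sq_vec x_def mabs_def by simp
    have "\<bar>monomial \<alpha> x * mderiv (\<lambda>_. 0) (hermite_fun (\<lambda>_. 0::nat)) x\<bar> = halfpow \<alpha> * (c0 * exp (- real (mabs \<alpha>) / 2))"
      unfolding mderiv_zero hermite0 mono nx c0_def[symmetric]
      using c0 by (simp add: halfpow_def abs_mult prod_nonneg)
    hence "halfpow \<alpha> * (c0 * exp (- real (mabs \<alpha>) / 2)) \<le> Kb * h ^ mabs \<alpha> * Mseq \<alpha>"
      using Kb[where \<alpha>=\<alpha> and \<beta>="\<lambda>_. 0" and x=x] by (simp add: madd_zero)
    also have "\<dots> \<le> K1 * h ^ mabs \<alpha> * Mseq \<alpha>"
      using Mpos h by (intro mult_right_mono) (auto simp: K1_def less_imp_le)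
    finally have "halfpow \<alpha> * (c0 * exp (- real (mabs \<alpha>) / 2)) \<le> K1 * h ^ mabs \<alpha> * Mseq \<alpha>" .
    hence "halfpow \<alpha> \<le> K1 * h ^ mabs \<alpha> * Mseq \<alpha> / (c0 * exp (- real (mabs \<alpha>) / 2))"
      using c0 by (simp add: field_simps)
    also have "\<dots> = K1 / c0 * (exp (real (mabs \<alpha>) / 2) * h ^ mabs \<alpha>) * Mseq \<alpha>"
      using c0 by (simp add: exp_minus field_simps)
    also have "exp (real (mabs \<alpha>) / 2) = exp (1/2) ^ mabs \<alpha>"
      by (simp add: exp_of_nat_mult[symmetric])
    finally show "halfpow \<alpha> \<le> K1 / c0 * (exp (1/2) * h) ^ mabs \<alpha> * Mseq \<alpha>"
      by (simp add: power_mult_distrib)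
  qed
qed

lemma hermite_in:
  "\<exists>D\<ge>1. \<forall>(Mseq::('d::finite) mindex \<Rightarrow> real) C C1. C > 0 \<longrightarrow> (\<forall>\<alpha>. halfpow \<alpha> \<le> C1 * C ^ mabs \<alpha> * Mseq \<alpha>)
      \<longrightarrow> GS_bounded (hermite_fun (\<gamma>::'d mindex)) Mseq (D * C)"
proof -
  obtain K D where KD: "K \<ge> 0" "D \<ge> 1" and b: "\<And>\<alpha> \<beta> x. \<bar>monomial \<alpha> x * mderiv \<beta> (hermite_fun \<gamma>) x\<bar>
      \<le> K * D ^ mabs (madd \<alpha> \<beta>) * halfpow (madd \<alpha> \<beta>)"
    using hermite_bound[of \<gamma>] by blast
  show ?thesis
  proof (intro exI[of _ D] conjI allI impI)
    show "D \<ge> 1" by fact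
    fix Mseq :: "'d mindex \<Rightarrow> real" and C C1 :: real
    assume C: "C > 0" and a: "\<forall>\<alpha>. halfpow \<alpha> \<le> C1 * C ^ mabs \<alpha> * Mseq \<alpha>"
    show "GS_bounded (hermite_fun \<gamma>) Mseq (D * C)"
      unfolding GS_bounded_def
    proof (intro exI allI)
      fix \<alpha> \<beta> x
      have "\<bar>monomial \<alpha> x * mderiv \<beta> (hermite_fun \<gamma>) x\<bar> \<le> K * D ^ mabs (madd \<alpha> \<beta>) * halfpow (madd \<alpha> \<beta>)" by (rule b)
      also have "\<dots> \<le> K * D ^ mabs (madd \<alpha> \<beta>) * (C1 * C ^ mabs (madd \<alpha> \<beta>) * Mseq (madd \<alpha> \<beta>))"
        using a KD by (intro mult_left_mono) auto
      also have "\<dots> = (K * C1) * (D * C) ^ mabs (madd \<alpha> \<beta>) * Mseq (madd \<alpha> \<beta>)"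
        by (simp add: power_mult_distrib algebra_simps)
      finally show "\<bar>monomial \<alpha> x * mderiv \<beta> (hermite_fun \<gamma>) x\<bar> \<le> (K * C1) * (D * C) ^ mabs (madd \<alpha> \<beta>) * Mseq (madd \<alpha> \<beta>)" .
    qed
  qed
qed

lemma wm_props:
  assumes "weight_matrix M"
  shows "\<And>lam \<alpha>. lam > 0 \<Longrightarrow> M lam \<alpha> > 0" "\<And>lam. lam > 0 \<Longrightarrow> M lam (\<lambda>_. 0) = 1"
    "\<And>lam kap \<alpha>. 0 < lam \<Longrightarrow> lam \<le> kap \<Longrightarrow> M lam \<alpha> \<le> M kap \<alpha>"
  using assms unfolding weight_matrix_def by auto

lemma mabs_madd0: "mabs (madd \<alpha> (\<lambda>_. 0)) = mabs \<alpha>" by (simp add: madd_zero)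

lemma halfpow_nonneg: "halfpow \<alpha> \<ge> 0" unfolding halfpow_def by (simp add: prod_nonneg)

lemma R_ab:
  fixes M :: "real \<Rightarrow> ('d::finite) mindex \<Rightarrow> real"
  assumes wm: "weight_matrix M"
  and pc: "\<forall>lam>0. \<exists>kap\<ge>lam. \<exists>A\<ge>1. \<forall>\<alpha> \<beta>. M lam \<alpha> * M lam \<beta> \<le> A ^ mabs (madd \<alpha> \<beta>) * M kap (madd \<alpha> \<beta>)"
  and a: "\<exists>lam>0. \<exists>C>0. \<exists>C1>0. \<forall>\<alpha>. halfpow \<alpha> \<le> C1 * C ^ mabs \<alpha> * M lam \<alpha>"
  shows "\<forall>lam>0. \<exists>kap\<ge>lam. \<exists>B>0. \<exists>C>0. \<exists>H>0. \<forall>\<alpha> \<beta>.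
          halfpow \<alpha> * M lam \<beta> \<le> B * C ^ mabs \<alpha> * H ^ mabs (madd \<alpha> \<beta>) * M kap (madd \<alpha> \<beta>)"
proof (intro allI impI)
  fix lam :: real assume lam: "lam > 0"
  obtain l0 C C1 where l0: "l0 > 0" "C > 0" "C1 > 0" and h: "\<And>\<alpha>. halfpow \<alpha> \<le> C1 * C ^ mabs \<alpha> * M l0 \<alpha>"
    using a by blast
  define mu where "mu = max lam l0"
  have mu: "mu > 0" "lam \<le> mu" "l0 \<le> mu" using lam l0 by (auto simp: mu_def)
  obtain kap A where kap: "kap \<ge> mu" "A \<ge> 1" and p: "\<And>\<alpha> \<beta>. M mu \<alpha> * M mu \<beta> \<le> A ^ mabs (madd \<alpha> \<beta>) * M kap (madd \<alpha> \<beta>)"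
    using pc mu(1) by blast
  show "\<exists>kap\<ge>lam. \<exists>B>0. \<exists>C>0. \<exists>H>0. \<forall>\<alpha> \<beta>.
          halfpow \<alpha> * M lam \<beta> \<le> B * C ^ mabs \<alpha> * H ^ mabs (madd \<alpha> \<beta>) * M kap (madd \<alpha> \<beta>)"
  proof (intro exI conjI allI)
    show "kap \<ge> lam" using kap mu by linarith
    show "C1 > 0" "C > 0" "A > 0" using l0 kap by auto
    fix \<alpha> \<beta>
    have "halfpow \<alpha> * M lam \<beta> \<le> (C1 * C ^ mabs \<alpha> * M l0 \<alpha>) * M lam \<beta>"
      using h wm_props(1)[OF wm lam] by (intro mult_right_mono) (auto simp: less_imp_le)
    also have "\<dots> \<le> (C1 * C ^ mabs \<alpha> * M mu \<alpha>) * M mu \<beta>"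
      using wm_props[OF wm] l0 lam mu
      by (intro mult_mono mult_left_mono) (auto simp: less_imp_le)
    also have "\<dots> = (C1 * C ^ mabs \<alpha>) * (M mu \<alpha> * M mu \<beta>)" by (simp add: algebra_simps)
    also have "\<dots> \<le> (C1 * C ^ mabs \<alpha>) * (A ^ mabs (madd \<alpha> \<beta>) * M kap (madd \<alpha> \<beta>))"
      using p l0 by (intro mult_left_mono) auto
    finally show "halfpow \<alpha> * M lam \<beta> \<le> C1 * C ^ mabs \<alpha> * A ^ mabs (madd \<alpha> \<beta>) * M kap (madd \<alpha> \<beta>)"
      by (simp add: algebra_simps)
  qed
qed

lemma R_ba:
  fixes M :: "real \<Rightarrow> ('d::finite) mindex \<Rightarrow> real"
  assumes wm: "weight_matrix M"
  and b: "\<forall>lam>0. \<exists>kap\<ge>lam. \<exists>B>0. \<exists>C>0. \<exists>H>0. \<forall>\<alpha> \<beta>.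
          halfpow \<alpha> * M lam \<beta> \<le> B * C ^ mabs \<alpha> * H ^ mabs (madd \<alpha> \<beta>) * M kap (madd \<alpha> \<beta>)"
  shows "\<exists>lam>0. \<exists>C>0. \<exists>C1>0. \<forall>\<alpha>. halfpow \<alpha> \<le> C1 * C ^ mabs \<alpha> * M lam \<alpha>"
proof -
  obtain kap B C H where k: "kap \<ge> 1" "B > 0" "C > 0" "H > 0" and h: "\<And>\<alpha> \<beta>.
          halfpow \<alpha> * M 1 \<beta> \<le> B * C ^ mabs \<alpha> * H ^ mabs (madd \<alpha> \<beta>) * M kap (madd \<alpha> \<beta>)"
    using b[rule_format, of 1] by auto
  show ?thesis
  proof (intro exI conjI allI)
    show "kap > 0" "C * H > 0" "B > 0" using k by auto
    fix \<alpha>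
    show "halfpow \<alpha> \<le> B * (C * H) ^ mabs \<alpha> * M kap \<alpha>"
      using h[of \<alpha> "\<lambda>_. 0"] wm_props(2)[OF wm, of 1]
      by (simp add: madd_zero power_mult_distrib algebra_simps)
  qed
qed

lemma R_ac:
  fixes M :: "real \<Rightarrow> ('d::finite) mindex \<Rightarrow> real"
  assumes a: "\<exists>lam>0. \<exists>C>0. \<exists>C1>0. \<forall>\<alpha>. halfpow \<alpha> \<le> C1 * C ^ mabs \<alpha> * M lam \<alpha>"
  shows "\<forall>\<gamma>. hermite_fun \<gamma> \<in> S_Roumieu M"
proof
  fix \<gamma> :: "'d mindex"
  obtain l0 C C1 where l0: "l0 > 0" "C > 0" "C1 > 0" and h: "\<forall>\<alpha>. halfpow \<alpha> \<le> C1 * C ^ mabs \<alpha> * M l0 \<alpha>"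
    using a by blast
  obtain D where D: "D \<ge> 1" and G: "\<forall>(Mseq::'d mindex \<Rightarrow> real) C C1. C > 0 \<longrightarrow> (\<forall>\<alpha>. halfpow \<alpha> \<le> C1 * C ^ mabs \<alpha> * Mseq \<alpha>)
      \<longrightarrow> GS_bounded (hermite_fun \<gamma>) Mseq (D * C)"
    using hermite_in[of \<gamma>] by blast
  have "GS_bounded (hermite_fun \<gamma>) (M l0) (D * C)" using G h l0 by blast
  moreover have "D * C > 0" using D l0 by simp
  ultimately show "hermite_fun \<gamma> \<in> S_Roumieu M"
    unfolding S_Roumieu_def using smooth_hermite l0 by blast
qed

lemma R_ca:
  fixes M :: "real \<Rightarrow> ('d::finite) mindex \<Rightarrow> real"
  assumes wm: "weight_matrix M" and c: "\<forall>\<gamma>. hermite_fun \<gamma> \<in> S_Roumieu M"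
  shows "\<exists>lam>0. \<exists>C>0. \<exists>C1>0. \<forall>\<alpha>. halfpow \<alpha> \<le> C1 * C ^ mabs \<alpha> * M lam \<alpha>"
proof -
  obtain lam h where lh: "lam > 0" "h > 0" and g: "GS_bounded (hermite_fun (\<lambda>_. 0::nat)) (M lam) h"
    using c[rule_format, of "\<lambda>_. 0"] unfolding S_Roumieu_def by blast
  obtain C1 where "C1 > 0" "\<forall>\<alpha>. halfpow \<alpha> \<le> C1 * (exp (1/2) * h) ^ mabs \<alpha> * M lam \<alpha>"
    using hermite0_lower[OF g lh(2)] wm_props(1)[OF wm lh(1)] by blast
  moreover have "exp (1/2) * h > 0" using lh by simp
  ultimately show ?thesis using lh by blast
qed

lemma B_ab:
  fixes M :: "real \<Rightarrow> ('d::finite) mindex \<Rightarrow> real"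
  assumes wm: "weight_matrix M"
  and pc: "\<forall>lam>0. \<exists>kap>0. kap \<le> lam \<and> (\<exists>A\<ge>1. \<forall>\<alpha> \<beta>.
        M kap \<alpha> * M kap \<beta> \<le> A ^ mabs (madd \<alpha> \<beta>) * M lam (madd \<alpha> \<beta>))"
  and a: "\<forall>lam>0. \<forall>C>0. \<exists>C1>0. \<forall>\<alpha>. halfpow \<alpha> \<le> C1 * C ^ mabs \<alpha> * M lam \<alpha>"
  shows "\<forall>lam>0. \<exists>kap>0. kap \<le> lam \<and> (\<exists>H>0. \<forall>C>0. \<exists>B>0. \<forall>\<alpha> \<beta>.
          halfpow \<alpha> * M kap \<beta> \<le> B * C ^ mabs \<alpha> * H ^ mabs (madd \<alpha> \<beta>) * M lam (madd \<alpha> \<beta>))"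
proof (intro allI impI)
  fix lam :: real assume lam: "lam > 0"
  obtain kap A where kap: "kap > 0" "kap \<le> lam" "A \<ge> 1" and p: "\<And>\<alpha> \<beta>. M kap \<alpha> * M kap \<beta> \<le> A ^ mabs (madd \<alpha> \<beta>) * M lam (madd \<alpha> \<beta>)"
    using pc lam by blast
  show "\<exists>kap>0. kap \<le> lam \<and> (\<exists>H>0. \<forall>C>0. \<exists>B>0. \<forall>\<alpha> \<beta>.
          halfpow \<alpha> * M kap \<beta> \<le> B * C ^ mabs \<alpha> * H ^ mabs (madd \<alpha> \<beta>) * M lam (madd \<alpha> \<beta>))"
  proof (rule exI[of _ kap], intro conjI)
    show "kap > 0" "kap \<le> lam" using kap by auto
    show "\<exists>H>0. \<forall>C>0. \<exists>B>0. \<forall>\<alpha> \<beta>.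
          halfpow \<alpha> * M kap \<beta> \<le> B * C ^ mabs \<alpha> * H ^ mabs (madd \<alpha> \<beta>) * M lam (madd \<alpha> \<beta>)"
  proof (rule exI[of _ A], intro conjI allI impI)
    show "A > 0" using kap by auto
    fix C :: real assume C: "C > 0"
    obtain C1 where C1: "C1 > 0" and h: "\<And>\<alpha>. halfpow \<alpha> \<le> C1 * C ^ mabs \<alpha> * M kap \<alpha>"
      using a kap C by blast
    show "\<exists>B>0. \<forall>\<alpha> \<beta>. halfpow \<alpha> * M kap \<beta> \<le> B * C ^ mabs \<alpha> * A ^ mabs (madd \<alpha> \<beta>) * M lam (madd \<alpha> \<beta>)"
    proof (intro exI conjI allI)
      show "C1 > 0" by fact
      fix \<alpha> \<beta>
      have "halfpow \<alpha> * M kap \<beta> \<le> (C1 * C ^ mabs \<alpha> * M kap \<alpha>) * M kap \<beta>"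
        using h wm_props(1)[OF wm kap(1)] by (intro mult_right_mono) (auto simp: less_imp_le)
      also have "\<dots> = (C1 * C ^ mabs \<alpha>) * (M kap \<alpha> * M kap \<beta>)" by (simp add: algebra_simps)
      also have "\<dots> \<le> (C1 * C ^ mabs \<alpha>) * (A ^ mabs (madd \<alpha> \<beta>) * M lam (madd \<alpha> \<beta>))"
        using p C1 C by (intro mult_left_mono) auto
      finally show "halfpow \<alpha> * M kap \<beta> \<le> C1 * C ^ mabs \<alpha> * A ^ mabs (madd \<alpha> \<beta>) * M lam (madd \<alpha> \<beta>)"
        by (simp add: algebra_simps)
    qed
  qed
  qed
qed

lemma B_ba:
  fixes M :: "real \<Rightarrow> ('d::finite) mindex \<Rightarrow> real"
  assumes wm: "weight_matrix M"
  and b: "\<forall>lam>0. \<exists>kap>0. kap \<le> lam \<and> (\<exists>H>0. \<forall>C>0. \<exists>B>0. \<forall>\<alpha> \<beta>.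
          halfpow \<alpha> * M kap \<beta> \<le> B * C ^ mabs \<alpha> * H ^ mabs (madd \<alpha> \<beta>) * M lam (madd \<alpha> \<beta>))"
  shows "\<forall>lam>0. \<forall>C>0. \<exists>C1>0. \<forall>\<alpha>. halfpow \<alpha> \<le> C1 * C ^ mabs \<alpha> * M lam \<alpha>"
proof (intro allI impI)
  fix lam C :: real assume lam: "lam > 0" and C: "C > 0"
  obtain kap H where kap: "kap > 0" "kap \<le> lam" "H > 0" and hb: "\<forall>C>0. \<exists>B>0. \<forall>\<alpha> \<beta>.
          halfpow \<alpha> * M kap \<beta> \<le> B * C ^ mabs \<alpha> * H ^ mabs (madd \<alpha> \<beta>) * M lam (madd \<alpha> \<beta>)"
    using b[rule_format, OF lam] by auto
  have CH: "C / H > 0" using C kap by simp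
  obtain B where B: "B > 0" and h: "\<And>\<alpha> \<beta>. halfpow \<alpha> * M kap \<beta> \<le> B * (C / H) ^ mabs \<alpha> * H ^ mabs (madd \<alpha> \<beta>) * M lam (madd \<alpha> \<beta>)"
    using hb[rule_format, OF CH] by auto
  show "\<exists>C1>0. \<forall>\<alpha>::'d mindex. halfpow \<alpha> \<le> C1 * C ^ mabs \<alpha> * M lam \<alpha>"
  proof (intro exI conjI allI)
    show "B > 0" by fact
    fix \<alpha> :: "'d mindex"
    have "(C / H) ^ mabs \<alpha> * H ^ mabs \<alpha> = C ^ mabs \<alpha>"
      using kap by (simp add: power_divide)
    then show "halfpow \<alpha> \<le> B * C ^ mabs \<alpha> * M lam \<alpha>"
      using h[of \<alpha> "\<lambda>_. 0"] wm_props(2)[OF wm kap(1)]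
      by (simp add: madd_zero mult.assoc)
  qed
qed

lemma B_ac:
  fixes M :: "real \<Rightarrow> ('d::finite) mindex \<Rightarrow> real"
  assumes a: "\<forall>lam>0. \<forall>C>0. \<exists>C1>0. \<forall>\<alpha>. halfpow \<alpha> \<le> C1 * C ^ mabs \<alpha> * M lam \<alpha>"
  shows "\<forall>\<gamma>. hermite_fun \<gamma> \<in> S_Beurling M"
proof
  fix \<gamma> :: "'d mindex"
  obtain D where D: "D \<ge> 1" and G: "\<forall>(Mseq::'d mindex \<Rightarrow> real) C C1. C > 0 \<longrightarrow> (\<forall>\<alpha>. halfpow \<alpha> \<le> C1 * C ^ mabs \<alpha> * Mseq \<alpha>)
      \<longrightarrow> GS_bounded (hermite_fun \<gamma>) Mseq (D * C)"
    using hermite_in[of \<gamma>] by blast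
  have "GS_bounded (hermite_fun \<gamma>) (M lam) h" if lh: "lam > 0" "h > 0" for lam h
  proof -
    have Cp: "h / D > 0" using lh D by simp
    then obtain C1 where "\<forall>\<alpha>. halfpow \<alpha> \<le> C1 * (h / D) ^ mabs \<alpha> * M lam \<alpha>"
      using a[rule_format, OF lh(1) Cp] by auto
    then have "GS_bounded (hermite_fun \<gamma>) (M lam) (D * (h / D))" using G[rule_format, OF Cp] by blast
    then show ?thesis using D by simp
  qed
  then show "hermite_fun \<gamma> \<in> S_Beurling M"
    unfolding S_Beurling_def using smooth_hermite by blast
qed

lemma B_ca:
  fixes M :: "real \<Rightarrow> ('d::finite) mindex \<Rightarrow> real"
  assumes wm: "weight_matrix M" and c: "\<forall>\<gamma>. hermite_fun \<gamma> \<in> S_Beurling M"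
  shows "\<forall>lam>0. \<forall>C>0. \<exists>C1>0. \<forall>\<alpha>. halfpow \<alpha> \<le> C1 * C ^ mabs \<alpha> * M lam \<alpha>"
proof (intro allI impI)
  fix lam C :: real assume lam: "lam > 0" and C: "C > 0"
  have hp: "C / exp (1/2) > 0" using C by simp
  have g: "GS_bounded (hermite_fun (\<lambda>_. 0::nat)) (M lam) (C / exp (1/2))"
    using c[rule_format, of "\<lambda>_. 0"] lam hp unfolding S_Beurling_def by simp
  obtain C1 where "C1 > 0" "\<forall>\<alpha>. halfpow \<alpha> \<le> C1 * (exp (1/2) * (C / exp (1/2))) ^ mabs \<alpha> * M lam \<alpha>"
    using hermite0_lower[OF g hp] wm_props(1)[OF wm lam] by blast
  then show "\<exists>C1>0. \<forall>\<alpha>::'d mindex. halfpow \<alpha> \<le> C1 * C ^ mabs \<alpha> * M lam \<alpha>" using C by auto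
qed

theorem proposition4p7:
  fixes M :: "real \<Rightarrow> ('d::finite) mindex \<Rightarrow> real"
  assumes wm: "weight_matrix M"
  shows
   "((\<forall>lam>0. \<exists>kap\<ge>lam. \<exists>A\<ge>1. \<forall>\<alpha> j.
        M lam (madd \<alpha> (unitidx j)) \<le> A ^ (mabs \<alpha> + 1) * M kap \<alpha>) \<and>
     (\<forall>lam>0. \<exists>kap\<ge>lam. \<exists>A\<ge>1. \<forall>\<alpha> \<beta>.
        M lam \<alpha> * M lam \<beta> \<le> A ^ mabs (madd \<alpha> \<beta>) * M kap (madd \<alpha> \<beta>))
    \<longrightarrow>
     (((\<exists>lam>0. \<exists>C>0. \<exists>C1>0. \<forall>\<alpha>. halfpow \<alpha> \<le> C1 * C ^ mabs \<alpha> * M lam \<alpha>)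
       \<longleftrightarrow>
       (\<forall>lam>0. \<exists>kap\<ge>lam. \<exists>B>0. \<exists>C>0. \<exists>H>0. \<forall>\<alpha> \<beta>.
          halfpow \<alpha> * M lam \<beta> \<le> B * C ^ mabs \<alpha> * H ^ mabs (madd \<alpha> \<beta>) * M kap (madd \<alpha> \<beta>)))
      \<and>
      ((\<forall>lam>0. \<exists>kap\<ge>lam. \<exists>B>0. \<exists>C>0. \<exists>H>0. \<forall>\<alpha> \<beta>.
          halfpow \<alpha> * M lam \<beta> \<le> B * C ^ mabs \<alpha> * H ^ mabs (madd \<alpha> \<beta>) * M kap (madd \<alpha> \<beta>))
       \<longleftrightarrow>
       (\<forall>\<gamma>. hermite_fun \<gamma> \<in> S_Roumieu M))))
   \<and>
   ((\<forall>lam>0. \<exists>kap>0. kap \<le> lam \<and> (\<exists>A\<ge>1. \<forall>\<alpha> j.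
        M kap (madd \<alpha> (unitidx j)) \<le> A ^ (mabs \<alpha> + 1) * M lam \<alpha>)) \<and>
     (\<forall>lam>0. \<exists>kap>0. kap \<le> lam \<and> (\<exists>A\<ge>1. \<forall>\<alpha> \<beta>.
        M kap \<alpha> * M kap \<beta> \<le> A ^ mabs (madd \<alpha> \<beta>) * M lam (madd \<alpha> \<beta>)))
    \<longrightarrow>
     (((\<forall>lam>0. \<forall>C>0. \<exists>C1>0. \<forall>\<alpha>. halfpow \<alpha> \<le> C1 * C ^ mabs \<alpha> * M lam \<alpha>)
       \<longleftrightarrow>
       (\<forall>lam>0. \<exists>kap>0. kap \<le> lam \<and> (\<exists>H>0. \<forall>C>0. \<exists>B>0. \<forall>\<alpha> \<beta>.
          halfpow \<alpha> * M kap \<beta> \<le> B * C ^ mabs \<alpha> * H ^ mabs (madd \<alpha> \<beta>) * M lam (madd \<alpha> \<beta>))))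
      \<and>
      ((\<forall>lam>0. \<exists>kap>0. kap \<le> lam \<and> (\<exists>H>0. \<forall>C>0. \<exists>B>0. \<forall>\<alpha> \<beta>.
          halfpow \<alpha> * M kap \<beta> \<le> B * C ^ mabs \<alpha> * H ^ mabs (madd \<alpha> \<beta>) * M lam (madd \<alpha> \<beta>)))
       \<longleftrightarrow>
       (\<forall>\<gamma>. hermite_fun \<gamma> \<in> S_Beurling M))))"
  apply (intro conjI impI; elim conjE)
     apply (rule iffI)
      apply (erule (1) R_ab[OF wm])
     apply (erule R_ba[OF wm])
    apply (rule iffI)
     apply (rule R_ac, erule R_ba[OF wm])
    apply (erule (1) R_ab[OF wm, OF _ R_ca[OF wm]])
   apply (rule iffI)
    apply (erule (1) B_ab[OF wm])
   apply (erule B_ba[OF wm])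
  apply (rule iffI)
   apply (rule B_ac, erule B_ba[OF wm])
  apply (erule (1) B_ab[OF wm, OF _ B_ca[OF wm]])
  done

end
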